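(* Let $\kappa$ be an infinitesimal character of the gap-insertion Hopf algebra $\mathbf{H}$ of noncrossing partitions, and let $K$ be the character of the block-substitution bialgebra $\mathbf{B}$ with $K(P)=\kappa(P)$ for every nonempty noncrossing partition $P$. Let $e$ be the infinitesimal character of $\mathbf{H}$ with $e(P)=1$ if $P$ is a noncrossing partition with exactly one block and $e(P)=0$ for all other noncrossing partitions. Then $$\kappa=e\curvearrowleft K,$$ where $(\alpha\curvearrowleft\phi):=(\alpha\otimes\phi)\circ\rho$ for a linear form $\alpha$ on $\mathbf{H}$ and a character $\phi$ of $\mathbf{B}$.
   Context: Noncrossing partitions of $[n]$: no $a<c<b<d$ with $a,b$ in one block and $c,d$ in another; partitions of linearly ordered finite sets are identified with partitions of $[m]$ via the order-preserving bijection; $P_{|X}$ is the induced partition. $\mathbf{H}$ is the free associative unital algebra on nonempty noncrossing partitions (its Hopf structure is the gap-insertion coproduct; only its algebra structure and counit matter here: the counit $\varepsilon$ is $1$ on $\mathbf 1$ and $0$ on nonempty monomials). An infinitesimal character of $\mathbf{H}$ is a linear form $f$ with $f(xy)=f(x)\varepsilon(y)+\varepsilon(x)f(y)$, i.e. vanishing on $\mathbf 1$ and on products of two nonempty monomials. $\mathbf{B}$ is the free commutative unital algebra on nonempty noncrossing partitions; a character of $\mathbf B$ is a unital algebra homomorphism to $\mathbb K$. For noncrossing $P\leq Q$ (refinement) with $Q=\{\tau_1,\dots,\tau_l\}$, $P/Q=P_{|\tau_1}\cdots P_{|\tau_l}\in\mathbf{B}$. The coaction $\rho:\mathbf{H}\to\mathbf{H}\otimes\mathbf{B}$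 is the algebra morphism with $\rho(P)=\sum_{Q\geq P\text{ noncrossing}}Q\otimes P/Q$. *)

theory Defs
  imports Main "HOL-Library.Multiset" "HOL-Library.Groups_Big_Fun"
begin

type_synonym ncpart = "nat set set"

definition is_partition :: "nat set \<Rightarrow> ncpart \<Rightarrow> bool" where
  "is_partition S P \<longleftrightarrow> (\<forall>B\<in>P. B \<noteq> {}) \<and> \<Union>P = S \<and>
     (\<forall>B\<in>P. \<forall>C\<in>P. B \<noteq> C \<longrightarrow> B \<inter> C = {})"

definition noncrossing :: "ncpart \<Rightarrow> bool" where
  "noncrossing P \<longleftrightarrow> \<not> (\<exists>B\<in>P. \<exists>C\<in>P. B \<noteq> C \<and>
     (\<exists>a b c d. a < c \<and> c < b \<and> b < d \<and> a \<in> B \<and> b \<in> B \<and> c \<in> C \<and> d \<in> C))"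

definition ncp :: "nat \<Rightarrow> ncpart \<Rightarrow> bool" where
  "ncp n P \<longleftrightarrow> is_partition {1..n} P \<and> noncrossing P"

text \<open>Nonempty noncrossing partitions: the generators of H and B.\<close>
definition nenc :: "ncpart \<Rightarrow> bool" where
  "nenc P \<longleftrightarrow> (\<exists>n\<ge>1. ncp n P)"

text \<open>Basis monomials: words (for the free algebra H) and multisets (for the free
  commutative algebra B) of nonempty noncrossing partitions.\<close>
definition valid_word :: "ncpart list \<Rightarrow> bool" where
  "valid_word w \<longleftrightarrow> (\<forall>P\<in>set w. nenc P)"

definition valid_mset :: "ncpart multiset \<Rightarrow> bool" where
  "valid_mset m \<longleftrightarrow> (\<forall>P\<in>#m. nenc P)"

text \<open>Linear forms on H are given by their values on the basis of words;
  characters of B by their values on the basis of multisets.\<close>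
definition inf_char :: "(ncpart list \<Rightarrow> 'a::field) \<Rightarrow> bool" where
  "inf_char f \<longleftrightarrow> f [] = 0 \<and>
     (\<forall>u v. valid_word u \<and> valid_word v \<and> u \<noteq> [] \<and> v \<noteq> [] \<longrightarrow> f (u @ v) = 0)"

definition char_B :: "(ncpart multiset \<Rightarrow> 'a::field) \<Rightarrow> bool" where
  "char_B phi \<longleftrightarrow> phi {#} = 1 \<and>
     (\<forall>m1 m2. valid_mset m1 \<and> valid_mset m2 \<longrightarrow> phi (m1 + m2) = phi m1 * phi m2)"

definition e_one :: "ncpart list \<Rightarrow> 'a::field" where
  "e_one w = (if \<exists>P. w = [P] \<and> nenc P \<and> card P = 1 then 1 else 0)"

definition refines :: "ncpart \<Rightarrow> ncpart \<Rightarrow> bool" where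
  "refines P Q \<longleftrightarrow> (\<forall>B\<in>P. \<exists>C\<in>Q. B \<subseteq> C)"

definition rank_in :: "nat set \<Rightarrow> nat \<Rightarrow> nat" where
  "rank_in X x = card {y\<in>X. y < x} + 1"

definition restr :: "ncpart \<Rightarrow> nat set \<Rightarrow> ncpart" where
  "restr P X = (\<lambda>B. rank_in X ` B) ` ((\<lambda>B. B \<inter> X) ` P - {{}})"

definition quot :: "ncpart \<Rightarrow> ncpart \<Rightarrow> ncpart multiset" where
  "quot P Q = image_mset (restr P) (mset_set Q)"

definition coarsenings :: "ncpart \<Rightarrow> ncpart set" where
  "coarsenings P = {Q. ncp (card (\<Union>P)) Q \<and> refines P Q}"

text \<open>Elements of H \<otimes> B as coefficient functions on the basis (word, multiset),
  with the product of the tensor product algebra (convolution).\<close>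
type_synonym 'a tensor = "ncpart list \<times> ncpart multiset \<Rightarrow> 'a"

definition tmul :: "'a::field tensor \<Rightarrow> 'a tensor \<Rightarrow> 'a tensor" where
  "tmul x y = (\<lambda>(w, m). \<Sum>i\<le>length w. \<Sum>m1\<in>{m1. m1 \<subseteq># m}.
       x (take i w, m1) * y (drop i w, m - m1))"

definition tone :: "'a::field tensor" where
  "tone = (\<lambda>(w, m). if w = [] \<and> m = {#} then 1 else 0)"

text \<open>rho(P) = sum over noncrossing Q \<ge> P of Q \<otimes> P/Q, extended multiplicatively.\<close>
definition rho_gen :: "ncpart \<Rightarrow> 'a::field tensor" where
  "rho_gen P = (\<lambda>(w, m). if \<exists>Q. w = [Q] \<and> Q \<in> coarsenings P \<and> m = quot P Q then 1 else 0)"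

definition rho :: "ncpart list \<Rightarrow> 'a::field tensor" where
  "rho w = foldr (\<lambda>P acc. tmul (rho_gen P) acc) w tone"

definition tensor_apply :: "(ncpart list \<Rightarrow> 'a::field) \<Rightarrow> (ncpart multiset \<Rightarrow> 'a) \<Rightarrow> 'a tensor \<Rightarrow> 'a" where
  "tensor_apply alpha phi X = Sum_any (\<lambda>(w, m). X (w, m) * alpha w * phi m)"

definition act_left :: "(ncpart list \<Rightarrow> 'a::field) \<Rightarrow> (ncpart multiset \<Rightarrow> 'a) \<Rightarrow> ncpart list \<Rightarrow> 'a" where
  "act_left alpha phi w = tensor_apply alpha phi (rho w)"

end

theory Submission
  imports Defs
begin

lemma finite_submsets: "finite {m1. m1 \<subseteq># (m::'b multiset)}"
proof -
  have "{m1. m1 \<subseteq># m} \<subseteq> mset ` {xs. set xs \<subseteq> set_mset m \<and> length xs \<le> size m}"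
  proof
    fix m1 assume "m1 \<in> {m1. m1 \<subseteq># m}"
    hence s: "m1 \<subseteq># m" by simp
    obtain xs where xs: "mset xs = m1" using ex_mset by blast
    have "set xs \<subseteq> set_mset m" using s xs by (metis mset_subset_eqD set_mset_mset subsetI)
    moreover have "length xs \<le> size m" using s xs by (metis size_mset size_mset_mono)
    ultimately show "m1 \<in> mset ` {xs. set xs \<subseteq> set_mset m \<and> length xs \<le> size m}"
      using xs by blast
  qed
  moreover have "finite {xs. set xs \<subseteq> set_mset m \<and> length xs \<le> size m}"
    by (rule finite_lists_length_le) simp
  ultimately show ?thesis by (meson finite_imageI finite_subset)
qed

lemma tmul_tone: "tmul x tone = x"
proof (rule ext, clarify)
  fix w m
  have inner: "(\<Sum>m1\<in>{m1. m1 \<subseteq># m}. x (take i w, m1) * tone (drop i w, m - m1))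
      = (if i \<ge> length w then x (take i w, m) else 0)" for i
  proof -
    have "(\<Sum>m1\<in>{m1. m1 \<subseteq># m}. x (take i w, m1) * tone (drop i w, m - m1))
      = (\<Sum>m1\<in>{m1. m1 \<subseteq># m}. if m1 = m then (if i \<ge> length w then x (take i w, m1) else 0) else 0)"
    proof (rule sum.cong)
      fix m1 assume "m1 \<in> {m1. m1 \<subseteq># m}"
      hence s: "m1 \<subseteq># m" by simp
      have "(m - m1 = {#}) = (m1 = m)" using s
        by (metis cancel_comm_monoid_add_class.diff_cancel subset_mset.antisym subset_mset.diff_add subset_mset.order_refl add_0_right)
      thus "x (take i w, m1) * tone (drop i w, m - m1) = (if m1 = m then (if i \<ge> length w then x (take i w, m1) else 0) else 0)"
        by (auto simp: tone_def)
    qed simp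
    also have "\<dots> = (if i \<ge> length w then x (take i w, m) else 0)"
      using finite_submsets[of m] by (simp add: sum.delta)
    finally show ?thesis .
  qed
  have "tmul x tone (w, m) = (\<Sum>i\<le>length w. if length w \<le> i then x (take i w, m) else 0)"
    unfolding tmul_def by (simp add: inner)
  also have "\<dots> = (\<Sum>i\<le>length w. if i = length w then x (w, m) else 0)"
    by (rule sum.cong) auto
  also have "\<dots> = x (w, m)" by simp
  finally show "tmul x tone (w, m) = x (w, m)" .
qed

lemma rho_length: "length w' \<noteq> length w \<Longrightarrow> rho w (w', m) = (0::'a::field)"
proof (induction w arbitrary: w' m)
  case Nil
  then show ?case by (simp add: rho_def tone_def)
next
  case (Cons P w)
  have "rho (P # w) (w', m) = tmul (rho_gen P) (rho w) (w', m)" by (simp add: rho_def)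
  also have "\<dots> = (\<Sum>i\<le>length w'. \<Sum>m1\<in>{m1. m1 \<subseteq># m}.
       rho_gen P (take i w', m1) * rho w (drop i w', m - m1))"
    by (simp add: tmul_def)
  also have "\<dots> = (0::'a)"
  proof (intro sum.neutral ballI)
    fix i m1
    show "rho_gen P (take i w', m1) * rho w (drop i w', m - m1) = (0::'a)"
    proof (cases "length (take i w') = 1")
      case True
      then have "length (drop i w') \<noteq> length w" using Cons.prems by auto
      then have "rho w (drop i w', m - m1) = (0::'a)" using Cons.IH by simp
      then show ?thesis by simp
    next
      case False
      then have "rho_gen P (take i w', m1) = (0::'a)"
        unfolding rho_gen_def by (auto simp del: length_take dest: arg_cong[where f=length])
      then show ?thesis by simp
    qed
  qed
  finally show ?case .
qed

lemma rank_id: "x \<in> {1..n} \<Longrightarrow> rank_in {1..n} x = x"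
proof -
  assume x: "x \<in> {1..n}"
  have "{y\<in>{1..n}. y < x} = {1..<x}" using x by auto
  thus ?thesis using x by (simp add: rank_in_def)
qed

lemma restr_full:
  assumes "ncp n P" shows "restr P {1..n} = P"
proof -
  have part: "is_partition {1..n} P" using assms by (simp add: ncp_def)
  have sub: "B \<subseteq> {1..n}" if "B \<in> P" for B using part that by (auto simp: is_partition_def)
  have ne: "{} \<notin> P" using part by (auto simp: is_partition_def)
  have "(\<lambda>B. B \<inter> {1..n}) ` P = (\<lambda>B. B) ` P"
    by (rule image_cong) (use sub in auto)
  hence e1: "(\<lambda>B. B \<inter> {1..n}) ` P - {{}} = P" using ne by auto
  have "rank_in {1..n} ` B = B" if "B \<in> P" for B
  proof -
    have "rank_in {1..n} ` B = (\<lambda>x. x) ` B"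
      by (rule image_cong) (use sub[OF that] rank_id in auto)
    thus ?thesis by simp
  qed
  hence "(\<lambda>B. rank_in {1..n} ` B) ` P = (\<lambda>B. B) ` P" by (rule image_cong[OF refl])
  thus ?thesis unfolding restr_def e1 by simp
qed

theorem mainTheorem10:
  fixes kappa :: "ncpart list \<Rightarrow> 'a::field"
    and K :: "ncpart multiset \<Rightarrow> 'a"
  assumes "inf_char kappa"
    and "char_B K"
    and "\<forall>P. nenc P \<longrightarrow> K {#P#} = kappa [P]"
  shows "\<forall>w. valid_word w \<longrightarrow> kappa w = act_left e_one K w"
proof (intro allI impI)
  fix w :: "ncpart list"
  assume vw: "valid_word w"
  consider "w = []" | P where "w = [P]" | P Q r where "w = P # Q # r"
    by (metis list.exhaust)
  then show "kappa w = act_left e_one K w"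
  proof cases
    case 1
    have "(\<lambda>(w', m). rho w (w', m) * e_one w' * K m) = (\<lambda>_. 0::'a)"
      using 1 by (auto simp: rho_def tone_def e_one_def)
    hence "act_left e_one K w = Sum_any (\<lambda>_. 0::'a)"
      unfolding act_left_def tensor_apply_def by simp
    then show ?thesis using 1 assms(1) by (simp add: inf_char_def)
  next
    case 3
    have v1: "valid_word [P]" and v2: "valid_word (Q # r)"
      using vw 3 by (auto simp: valid_word_def)
    have "w = [P] @ (Q # r)" using 3 by simp
    hence "kappa w = 0"
      using assms(1) v1 v2 unfolding inf_char_def by blast
    moreover have "(\<lambda>(w', m). rho w (w', m) * e_one w' * K m) = (\<lambda>_. 0::'a)"
    proof (rule ext, clarify)
      fix w' m
      show "rho w (w', m) * e_one w' * K m = 0"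
      proof (cases "length w' = 1")
        case True
        then have "rho w (w', m) = (0::'a)" using rho_length[of w' w m] 3 by simp
        then show ?thesis by simp
      next
        case False
        then show ?thesis by (auto simp: e_one_def)
      qed
    qed
    ultimately show ?thesis unfolding act_left_def tensor_apply_def by simp
  next
    case 2
    have nP: "nenc P" using vw 2 by (simp add: valid_word_def)
    then obtain n where n1: "n \<ge> 1" and nP': "ncp n P" by (auto simp: nenc_def)
    have unP: "\<Union>P = {1..n}" using nP' by (simp add: ncp_def is_partition_def)
    define Q0 where "Q0 = {{1..n::nat}}"
    have ncQ0: "ncp n Q0" using n1 by (auto simp: Q0_def ncp_def is_partition_def noncrossing_def)
    have rhoP: "rho w = rho_gen P" using 2 by (simp add: rho_def tmul_tone)
    have "(\<lambda>(w', m). rho w (w', m) * e_one w' * K m) =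
        (\<lambda>b. if b = ([Q0], {#P#}) then K {#P#} else 0)"
      unfolding rhoP
    proof (rule ext, clarify)
      fix w' m
      show "rho_gen P (w', m) * e_one w' * K m = (if (w', m) = ([Q0], {#P#}) then K {#P#} else 0)"
      proof (cases "(w', m) = ([Q0], {#P#})")
        case True
        have "Q0 \<in> coarsenings P" using ncQ0 unP
          by (auto simp: coarsenings_def refines_def Q0_def)
        moreover have "quot P Q0 = {#P#}" using restr_full[OF nP'] by (simp add: quot_def Q0_def)
        moreover have "e_one [Q0] = (1::'a)" using ncQ0 n1 by (auto simp: e_one_def nenc_def Q0_def)
        ultimately show ?thesis using True by (auto simp: rho_gen_def)
      next
        case False
        show ?thesis
        proof (rule ccontr)
          assume "\<not> ?thesis"
          hence nz: "rho_gen P (w', m) \<noteq> (0::'a)" "e_one w' \<noteq> (0::'a)" using False by auto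
          from nz(1) obtain Q where Q: "w' = [Q]" "Q \<in> coarsenings P" "m = quot P Q"
            by (auto simp: rho_gen_def split: if_splits)
          from nz(2) Q have c1: "card Q = 1" by (auto simp: e_one_def split: if_splits)
          then obtain C where C: "Q = {C}" by (meson card_1_singletonE)
          have "ncp n Q" using Q(2) unP by (simp add: coarsenings_def)
          hence "C = {1..n}" using C by (simp add: ncp_def is_partition_def)
          hence "Q = Q0" using C Q0_def by simp
          hence "(w', m) = ([Q0], {#P#})" using Q restr_full[OF nP'] by (simp add: quot_def Q0_def)
          thus False using False by simp
        qed
      qed
    qed
    hence "act_left e_one K w = K {#P#}" unfolding act_left_def tensor_apply_def by simp
    then show ?thesis using assms(3) nP 2 by simp
  qed
qed

end
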